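(* Let $B=(b_{ij})$ be an $n\times n$ integer matrix and let $d_1,\dots,d_n$ be integers such that $b_{ij}d_j=-b_{ji}d_i$ for all $i,j$. Fix $k\in\{1,\dots,n\}$ and assume every entry $b_{kj}$ ($j=1,\dots,n$) of the $k$-th row of $B$ is divisible by $d_k$. Let $l\in\{1,\dots,n\}$ and let $B'=\mu_l(B)$ be the matrix mutation of $B$ in direction $l$. Then every entry $b'_{kj}$ of the $k$-th row of $B'$ is divisible by $d_k$.
   Context: Matrix mutation in direction $l$: $B'=\mu_l(B)$ has entries $b'_{ij}=-b_{ij}$ if $i=l$ or $j=l$, and $b'_{ij}=b_{ij}+\frac{|b_{il}|b_{lj}+b_{il}|b_{lj}|}{2}$ otherwise. *)

theory Defs
  imports "HOL-Analysis.Analysis"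
begin

text \<open>Matrix mutation in direction l. The numerator |b_il| b_lj + b_il |b_lj|
  is always even, so integer division by 2 is exact.\<close>
definition mutate :: "int ^'n ^'n \<Rightarrow> 'n \<Rightarrow> int ^'n ^'n" where
  "mutate B l = (\<chi> i j. if i = l \<or> j = l then - (B $ i $ j)
     else B $ i $ j + (\<bar>B $ i $ l\<bar> * B $ l $ j + B $ i $ l * \<bar>B $ l $ j\<bar>) div 2)"

end

theory Submission
  imports Defs
begin

lemma key: fixes a b :: int
  shows "(\<bar>a\<bar> * b + a * \<bar>b\<bar>) div 2 = 0 \<or> (\<bar>a\<bar> * b + a * \<bar>b\<bar>) div 2 = a * b
     \<or> (\<bar>a\<bar> * b + a * \<bar>b\<bar>) div 2 = - (a * b)"
proof (cases "a \<ge> 0"; cases "b \<ge> 0")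
qed (auto simp: abs_if)

theorem mainTheorem1:
  fixes B :: "int ^'n ^'n" and d :: "'n \<Rightarrow> int" and k l :: 'n
  assumes skew: "\<And>i j. B $ i $ j * d j = - (B $ j $ i * d i)"
    and row: "\<And>j. d k dvd B $ k $ j"
  shows "\<forall>j. d k dvd (mutate B l) $ k $ j"
proof
  fix j
  have a: "d k dvd B $ k $ l" by (rule row)
  have "d k dvd (\<bar>B $ k $ l\<bar> * B $ l $ j + B $ k $ l * \<bar>B $ l $ j\<bar>) div 2"
    using key[of "B $ k $ l" "B $ l $ j"] a by auto
  then show "d k dvd (mutate B l) $ k $ j"
    unfolding mutate_def using row by auto
qed

end
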